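(* Let $G$ be a Borel groupoid. If there is a proper Borel $G$-space $X$ such that the moment map $r_X:X\to G^{(0)}$ is Borel amenable ($G$-amenable), then $G$ is Borel amenable.
   Context: All Borel spaces are analytic. A Borel $G$-space $X$ has a Borel moment map $r_X:X\to G^{(0)}$ and Borel action $\gamma\cdot x$ defined when $s(\gamma)=r_X(x)$; $G$ acts on $G^{(0)}$ by $\gamma\cdot s(\gamma)=r(\gamma)$. For a Borel surjection $\pi:X\to Y$, a $\pi$-system is a family $\{m^y\}$ of measures with $m^y$ supported in $\pi^{-1}(y)$ and $y\mapsto\int f\,dm^y$ Borel for all nonnegative Borel $f$. A surjective Borel $G$-map $\pi$ is $G$-properly amenable if there is a $\pi$-system of probability measures with $\gamma\cdot m^y=m^{\gamma\cdot y}$, and $G$-amenable if there is a sequence of $\pi$-systems $m_n$ of probability measures with $\|\gamma\cdot m_n^y-m_n^{\gamma\cdot y}\|_1\to0$ for all composable $\gamma,y$ (total variation norm; $(\gamma\cdot m)(E)=m(\gamma^{-1}E)$). $X$ is a proper $G$-space if the projection $X*G\to X$, $X*G=\{(x,\gamma):r_X(x)=r(\gamma)\}$ with diagonal action, is $G$-properly amenable. $G$ is Borel amenable if $r:G\to G^{(0)}$ is $G$-amenable. *)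

theory Defs
  imports "HOL-Probability.Probability"
begin

definition analytic_set :: "real set \<Rightarrow> bool" where
  "analytic_set A \<longleftrightarrow> A = {} \<or> (\<exists>f :: (nat \<Rightarrow> nat) \<Rightarrow> real. continuous_on UNIV f \<and> range f = A)"

text \<open>A Borel space is analytic if it is Borel isomorphic to an analytic subset of a
  Polish space (here w.l.o.g. the reals) with the relative Borel structure.\<close>
definition analytic_space :: "'a measure \<Rightarrow> bool" where
  "analytic_space M \<longleftrightarrow> (\<exists>(f :: 'a \<Rightarrow> real) A. analytic_set A \<and> bij_betw f (space M) A \<and>
      f \<in> measurable M (restrict_space borel A) \<and>
      (\<forall>B\<in>sets M. f ` B \<in> sets (restrict_space borel A)))"

record 'g groupoid =
  arrows :: "'g measure"
  rng :: "'g \<Rightarrow> 'g"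
  src :: "'g \<Rightarrow> 'g"
  comp :: "'g \<Rightarrow> 'g \<Rightarrow> 'g"
  ginv :: "'g \<Rightarrow> 'g"

definition units :: "'g groupoid \<Rightarrow> 'g set" where
  "units G = rng G ` space (arrows G)"

definition unit_space :: "'g groupoid \<Rightarrow> 'g measure" where
  "unit_space G = restrict_space (arrows G) (units G)"

definition composable_pairs :: "'g groupoid \<Rightarrow> ('g \<times> 'g) measure" where
  "composable_pairs G = restrict_space (arrows G \<Otimes>\<^sub>M arrows G)
     {(a, b). a \<in> space (arrows G) \<and> b \<in> space (arrows G) \<and> src G a = rng G b}"

definition groupoid :: "'g groupoid \<Rightarrow> bool" where
  "groupoid G \<longleftrightarrow>
    (let S = space (arrows G) in
     (\<forall>u\<in>units G. u \<in> S \<and> rng G u = u \<and> src G u = u) \<and>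
     (\<forall>a\<in>S. src G a \<in> units G) \<and>
     (\<forall>a\<in>S. \<forall>b\<in>S. src G a = rng G b \<longrightarrow>
        comp G a b \<in> S \<and> rng G (comp G a b) = rng G a \<and> src G (comp G a b) = src G b) \<and>
     (\<forall>a\<in>S. \<forall>b\<in>S. \<forall>c\<in>S. src G a = rng G b \<longrightarrow> src G b = rng G c \<longrightarrow>
        comp G (comp G a b) c = comp G a (comp G b c)) \<and>
     (\<forall>a\<in>S. comp G (rng G a) a = a \<and> comp G a (src G a) = a) \<and>
     (\<forall>a\<in>S. ginv G a \<in> S \<and> rng G (ginv G a) = src G a \<and> src G (ginv G a) = rng G a \<and>
        comp G a (ginv G a) = rng G a \<and> comp G (ginv G a) a = src G a))"

definition borel_groupoid :: "'g groupoid \<Rightarrow> bool" where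
  "borel_groupoid G \<longleftrightarrow> groupoid G \<and> analytic_space (arrows G) \<and>
     rng G \<in> measurable (arrows G) (arrows G) \<and>
     src G \<in> measurable (arrows G) (arrows G) \<and>
     ginv G \<in> measurable (arrows G) (arrows G) \<and>
     (\<lambda>(a, b). comp G a b) \<in> measurable (composable_pairs G) (arrows G)"

text \<open>X with moment map rX and action act (act g x defined when src g = rX x).\<close>
definition G_space :: "'g groupoid \<Rightarrow> 'x measure \<Rightarrow> ('x \<Rightarrow> 'g) \<Rightarrow> ('g \<Rightarrow> 'x \<Rightarrow> 'x) \<Rightarrow> bool" where
  "G_space G X rX act \<longleftrightarrow> analytic_space X \<and>
     rX \<in> measurable X (unit_space G) \<and>
     (\<forall>x\<in>space X. act (rX x) x = x) \<and>
     (\<forall>g\<in>space (arrows G). \<forall>x\<in>space X. src G g = rX x \<longrightarrow>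
        act g x \<in> space X \<and> rX (act g x) = rng G g) \<and>
     (\<forall>a\<in>space (arrows G). \<forall>b\<in>space (arrows G). \<forall>x\<in>space X.
        src G a = rng G b \<longrightarrow> src G b = rX x \<longrightarrow> act (comp G a b) x = act a (act b x)) \<and>
     (\<lambda>(g, x). act g x) \<in> measurable
        (restrict_space (arrows G \<Otimes>\<^sub>M X)
           {(g, x). g \<in> space (arrows G) \<and> x \<in> space X \<and> src G g = rX x}) X"

definition G_map :: "'g groupoid \<Rightarrow> 'x measure \<Rightarrow> ('x \<Rightarrow> 'g) \<Rightarrow> ('g \<Rightarrow> 'x \<Rightarrow> 'x) \<Rightarrow>
    'y measure \<Rightarrow> ('y \<Rightarrow> 'g) \<Rightarrow> ('g \<Rightarrow> 'y \<Rightarrow> 'y) \<Rightarrow> ('x \<Rightarrow> 'y) \<Rightarrow> bool" where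
  "G_map G X rX actX Y rY actY \<pi> \<longleftrightarrow> G_space G X rX actX \<and> G_space G Y rY actY \<and>
     \<pi> \<in> measurable X Y \<and>
     (\<forall>x\<in>space X. rY (\<pi> x) = rX x) \<and>
     (\<forall>g\<in>space (arrows G). \<forall>x\<in>space X. src G g = rX x \<longrightarrow> \<pi> (actX g x) = actY g (\<pi> x))"

definition pi_sys :: "'x measure \<Rightarrow> 'y measure \<Rightarrow> ('x \<Rightarrow> 'y) \<Rightarrow> ('y \<Rightarrow> 'x measure) \<Rightarrow> bool" where
  "pi_sys X Y \<pi> m \<longleftrightarrow>
     (\<forall>y\<in>space Y. sets (m y) = sets X \<and>
        (\<exists>A\<in>sets X. A \<subseteq> \<pi> -` {y} \<and> emeasure (m y) (space X - A) = 0)) \<and>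
     (\<forall>f\<in>borel_measurable X. (\<lambda>y. \<integral>\<^sup>+ x. f x \<partial>m y) \<in> borel_measurable Y)"

definition gact_measure :: "'g groupoid \<Rightarrow> 'x measure \<Rightarrow> ('x \<Rightarrow> 'g) \<Rightarrow> ('g \<Rightarrow> 'x \<Rightarrow> 'x) \<Rightarrow>
    'g \<Rightarrow> 'x measure \<Rightarrow> 'x measure" where
  "gact_measure G X rX act g m = measure_of (space X) (sets X)
     (\<lambda>E. emeasure m {x \<in> space X. rX x = src G g \<and> act g x \<in> E})"

definition tv_norm :: "'x measure \<Rightarrow> 'x measure \<Rightarrow> real" where
  "tv_norm \<mu> \<nu> = (SUP P \<in> {P. finite P \<and> P \<subseteq> sets \<mu> \<and> disjoint P}.
       \<Sum>A\<in>P. \<bar>measure \<mu> A - measure \<nu> A\<bar>)"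

definition properly_amenable :: "'g groupoid \<Rightarrow> 'x measure \<Rightarrow> ('x \<Rightarrow> 'g) \<Rightarrow> ('g \<Rightarrow> 'x \<Rightarrow> 'x) \<Rightarrow>
    'y measure \<Rightarrow> ('y \<Rightarrow> 'g) \<Rightarrow> ('g \<Rightarrow> 'y \<Rightarrow> 'y) \<Rightarrow> ('x \<Rightarrow> 'y) \<Rightarrow> bool" where
  "properly_amenable G X rX actX Y rY actY \<pi> \<longleftrightarrow>
     G_map G X rX actX Y rY actY \<pi> \<and> \<pi> ` space X = space Y \<and>
     (\<exists>m. pi_sys X Y \<pi> m \<and> (\<forall>y\<in>space Y. prob_space (m y)) \<and>
        (\<forall>g\<in>space (arrows G). \<forall>y\<in>space Y. src G g = rY y \<longrightarrow>
           gact_measure G X rX actX g (m y) = m (actY g y)))"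

definition G_amenable :: "'g groupoid \<Rightarrow> 'x measure \<Rightarrow> ('x \<Rightarrow> 'g) \<Rightarrow> ('g \<Rightarrow> 'x \<Rightarrow> 'x) \<Rightarrow>
    'y measure \<Rightarrow> ('y \<Rightarrow> 'g) \<Rightarrow> ('g \<Rightarrow> 'y \<Rightarrow> 'y) \<Rightarrow> ('x \<Rightarrow> 'y) \<Rightarrow> bool" where
  "G_amenable G X rX actX Y rY actY \<pi> \<longleftrightarrow>
     G_map G X rX actX Y rY actY \<pi> \<and> \<pi> ` space X = space Y \<and>
     (\<exists>m :: nat \<Rightarrow> 'y \<Rightarrow> 'x measure.
        (\<forall>n. pi_sys X Y \<pi> (m n) \<and> (\<forall>y\<in>space Y. prob_space (m n y))) \<and>
        (\<forall>g\<in>space (arrows G). \<forall>y\<in>space Y. src G g = rY y \<longrightarrow>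
           (\<lambda>n. tv_norm (gact_measure G X rX actX g (m n y)) (m n (actY g y))) \<longlonglongrightarrow> 0))"

text \<open>G acting on its unit space: g . src g = rng g; moment map the identity.\<close>
definition unit_action :: "'g groupoid \<Rightarrow> 'g \<Rightarrow> 'g \<Rightarrow> 'g" where
  "unit_action G g u = rng G g"

definition fib_prod :: "'g groupoid \<Rightarrow> 'x measure \<Rightarrow> ('x \<Rightarrow> 'g) \<Rightarrow> ('x \<times> 'g) measure" where
  "fib_prod G X rX = restrict_space (X \<Otimes>\<^sub>M arrows G)
     {(x, g). x \<in> space X \<and> g \<in> space (arrows G) \<and> rX x = rng G g}"

definition proper_G_space :: "'g groupoid \<Rightarrow> 'x measure \<Rightarrow> ('x \<Rightarrow> 'g) \<Rightarrow> ('g \<Rightarrow> 'x \<Rightarrow> 'x) \<Rightarrow> bool" where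
  "proper_G_space G X rX act \<longleftrightarrow> G_space G X rX act \<and>
     properly_amenable G (fib_prod G X rX) (\<lambda>(x, g). rX x)
       (\<lambda>h (x, g). (act h x, comp G h g)) X rX act fst"

definition borel_amenable :: "'g groupoid \<Rightarrow> bool" where
  "borel_amenable G \<longleftrightarrow>
     G_amenable G (arrows G) (rng G) (comp G) (unit_space G) (\<lambda>u. u) (unit_action G) (rng G)"

end

theory Submission
  imports Defs
begin



lemma tv_sum_le:
  assumes "finite_measure \<mu>" "finite_measure \<nu>" "sets \<nu> = sets \<mu>"
    and "finite P" "P \<subseteq> sets \<mu>" "disjoint P"
  shows "(\<Sum>A\<in>P. \<bar>measure \<mu> A - measure \<nu> A\<bar>) \<le> measure \<mu> (space \<mu>) + measure \<nu> (space \<nu>)"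
proof -
  interpret M: finite_measure \<mu> by fact
  interpret N: finite_measure \<nu> by fact
  have "(\<Sum>A\<in>P. \<bar>measure \<mu> A - measure \<nu> A\<bar>) \<le> (\<Sum>A\<in>P. measure \<mu> A + measure \<nu> A)"
    by (intro sum_mono) (smt (verit) measure_nonneg)
  also have "\<dots> = measure \<mu> (\<Union>P) + measure \<nu> (\<Union>P)"
  proof -
    have "measure \<mu> (\<Union>A\<in>P. id A) = (\<Sum>A\<in>P. measure \<mu> (id A))"
      using assms by (intro M.finite_measure_finite_Union) (auto simp: disjoint_family_on_def disjoint_def)
    moreover have "measure \<nu> (\<Union>A\<in>P. id A) = (\<Sum>A\<in>P. measure \<nu> (id A))"
      using assms by (intro N.finite_measure_finite_Union) (auto simp: disjoint_family_on_def disjoint_def)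
    ultimately show ?thesis by (simp add: sum.distrib)
  qed
  also have "\<dots> \<le> measure \<mu> (space \<mu>) + measure \<nu> (space \<nu>)"
    using assms by (intro add_mono M.bounded_measure N.bounded_measure)
  finally show ?thesis .
qed

lemma tv_bdd:
  assumes "finite_measure \<mu>" "finite_measure \<nu>" "sets \<nu> = sets \<mu>"
  shows "bdd_above ((\<lambda>P. \<Sum>A\<in>P. \<bar>measure \<mu> A - measure \<nu> A\<bar>) ` {P. finite P \<and> P \<subseteq> sets \<mu> \<and> disjoint P})"
  using tv_sum_le[OF assms] by (intro bdd_aboveI[where M="measure \<mu> (space \<mu>) + measure \<nu> (space \<nu>)"]) auto

lemma tv_upper:
  assumes "finite_measure \<mu>" "finite_measure \<nu>" "sets \<nu> = sets \<mu>"
    and "finite P" "P \<subseteq> sets \<mu>" "disjoint P"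
  shows "(\<Sum>A\<in>P. \<bar>measure \<mu> A - measure \<nu> A\<bar>) \<le> tv_norm \<mu> \<nu>"
  unfolding tv_norm_def using assms
  by (intro cSUP_upper[OF _ tv_bdd[OF assms(1-3)]]) auto

lemma tv_nonneg:
  assumes "finite_measure \<mu>" "finite_measure \<nu>" "sets \<nu> = sets \<mu>"
  shows "0 \<le> tv_norm \<mu> \<nu>"
  using tv_upper[OF assms, of "{}"] by (simp add: disjoint_def)




lemma hahn_int:
  fixes g :: "'a \<Rightarrow> real"
  assumes fa: "finite_measure \<nu>a" and fb: "finite_measure \<nu>b"
    and sa: "sets \<nu>a = sets M" and sb: "sets \<nu>b = sets M" and Y: "Y \<in> sets M"
    and le: "\<And>X. X \<in> sets M \<Longrightarrow> X \<subseteq> Y \<Longrightarrow> emeasure \<nu>a X \<le> emeasure \<nu>b X"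
    and g: "g \<in> borel_measurable M" and gb: "\<And>x. x \<in> space M \<Longrightarrow> 0 \<le> g x \<and> g x \<le> 1"
  shows "(\<integral>x. g x * indicator Y x \<partial>\<nu>a) \<le> (\<integral>x. g x * indicator Y x \<partial>\<nu>b)"
proof -
  interpret A: finite_measure \<nu>a by fact
  interpret B: finite_measure \<nu>b by fact
  have spa: "space \<nu>a = space M" and spb: "space \<nu>b = space M"
    using sa sb by (metis sets_eq_imp_space_eq)+
  have ga: "g \<in> borel_measurable \<nu>a" using g by (subst measurable_cong_sets[OF sa refl])
  have gb': "g \<in> borel_measurable \<nu>b" using g by (subst measurable_cong_sets[OF sb refl])
  have Ya: "Y \<in> sets \<nu>a" and Yb: "Y \<in> sets \<nu>b" using Y sa sb by auto
  have dle: "density \<nu>a (indicator Y) \<le> density \<nu>b (indicator Y)"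
  proof (subst le_measure)
    show "sets (density \<nu>a (indicator Y)) = sets (density \<nu>b (indicator Y))" using sa sb by simp
    show "\<forall>A\<in>sets (density \<nu>a (indicator Y)). emeasure (density \<nu>a (indicator Y)) A \<le> emeasure (density \<nu>b (indicator Y)) A"
    proof
      fix A assume "A \<in> sets (density \<nu>a (indicator Y))"
      then have A: "A \<in> sets M" using sa by simp
      show "emeasure (density \<nu>a (indicator Y)) A \<le> emeasure (density \<nu>b (indicator Y)) A"
        using A Y sa sb by (simp add: emeasure_restricted le)
    qed
  qed
  have "(\<integral>\<^sup>+x. ennreal (g x) \<partial>density \<nu>a (indicator Y)) \<le> (\<integral>\<^sup>+x. ennreal (g x) \<partial>density \<nu>b (indicator Y))"
    using dle sa sb by (intro nn_integral_mono_measure) simp_all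
  moreover have key: "\<And>\<nu>. sets \<nu> = sets M \<Longrightarrow> finite_measure \<nu> \<Longrightarrow>
      (\<integral>\<^sup>+x. ennreal (g x) \<partial>density \<nu> (indicator Y)) = ennreal (\<integral>x. g x * indicator Y x \<partial>\<nu>)"
  proof -
    fix \<nu> :: "'a measure" assume s: "sets \<nu> = sets M" and fin: "finite_measure \<nu>"
    interpret N: finite_measure \<nu> by fact
    have sp: "space \<nu> = space M" using s by (metis sets_eq_imp_space_eq)
    have gm: "g \<in> borel_measurable \<nu>" using g by (subst measurable_cong_sets[OF s refl])
    have Yn: "Y \<in> sets \<nu>" using Y s by simp
    have "(\<integral>\<^sup>+x. ennreal (g x) \<partial>density \<nu> (indicator Y)) = (\<integral>\<^sup>+x. indicator Y x * ennreal (g x) \<partial>\<nu>)"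
      using gm Yn by (intro nn_integral_density) auto
    also have "\<dots> = (\<integral>\<^sup>+x. ennreal (g x * indicator Y x) \<partial>\<nu>)"
      by (intro nn_integral_cong) (auto simp: indicator_def)
    also have "\<dots> = ennreal (\<integral>x. g x * indicator Y x \<partial>\<nu>)"
    proof (rule nn_integral_eq_integral)
      show "integrable \<nu> (\<lambda>x. g x * indicator Y x)"
        using gm Yn gb sp by (intro N.integrable_const_bound[where B=1]) (auto simp: indicator_def)
      show "AE x in \<nu>. 0 \<le> g x * indicator Y x" using gb sp by (auto simp: indicator_def)
    qed
    finally show "(\<integral>\<^sup>+x. ennreal (g x) \<partial>density \<nu> (indicator Y)) = ennreal (\<integral>x. g x * indicator Y x \<partial>\<nu>)" .
  qed
  ultimately have "ennreal (\<integral>x. g x * indicator Y x \<partial>\<nu>a) \<le> ennreal (\<integral>x. g x * indicator Y x \<partial>\<nu>b)"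
    using key[OF sa fa] key[OF sb fb] by simp
  moreover have "0 \<le> (\<integral>x. g x * indicator Y x \<partial>\<nu>b)"
    using gb spb by (intro integral_nonneg_AE) (auto simp: indicator_def)
  ultimately show ?thesis by (simp add: ennreal_le_iff)
qed




lemma intg_bound:
  fixes f :: "'a \<Rightarrow> real"
  assumes "finite_measure \<nu>" "sets \<nu> = sets M" "f \<in> borel_measurable M"
    "\<And>x. x \<in> space M \<Longrightarrow> \<bar>f x\<bar> \<le> c"
  shows "integrable \<nu> f"
proof -
  interpret finite_measure \<nu> by fact
  have sp: "space \<nu> = space M" using assms(2) by (metis sets_eq_imp_space_eq)
  have "f \<in> borel_measurable \<nu>" using assms(3) by (subst measurable_cong_sets[OF assms(2) refl])
  then show ?thesis using assms(4) sp by (intro integrable_const_bound[where B=c]) auto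
qed

lemma expand_split:
  fixes k :: "'a \<Rightarrow> real"
  assumes "finite_measure \<nu>" "sets \<nu> = sets M" "k \<in> borel_measurable M"
    "\<And>x. x \<in> space M \<Longrightarrow> \<bar>k x\<bar> \<le> 1" "Y \<in> sets M"
  shows "(\<integral>x. k x \<partial>\<nu>) = (\<integral>x. k x * indicator Y x \<partial>\<nu>) + (\<integral>x. k x * indicator (space M - Y) x \<partial>\<nu>)"
proof -
  have sp: "space \<nu> = space M" using assms(2) by (metis sets_eq_imp_space_eq)
  have "(\<integral>x. k x \<partial>\<nu>) = (\<integral>x. k x * indicator Y x + k x * indicator (space M - Y) x \<partial>\<nu>)"
    using sp by (intro Bochner_Integration.integral_cong) (auto simp: indicator_def)
  also have "\<dots> = (\<integral>x. k x * indicator Y x \<partial>\<nu>) + (\<integral>x. k x * indicator (space M - Y) x \<partial>\<nu>)"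
    using assms by (intro Bochner_Integration.integral_add intg_bound[where c=1]) (auto simp: indicator_def)
  finally show ?thesis .
qed

lemma expand_sum:
  fixes k :: "'b \<Rightarrow> 'a \<Rightarrow> real"
  assumes "finite_measure \<nu>" "sets \<nu> = sets M" "\<And>A. A \<in> P \<Longrightarrow> k A \<in> borel_measurable M"
    "\<And>A x. A \<in> P \<Longrightarrow> x \<in> space M \<Longrightarrow> \<bar>k A x\<bar> \<le> 1" "W \<in> sets M" "finite P"
  shows "(\<integral>x. (1 - (\<Sum>A\<in>P. k A x)) * indicator W x \<partial>\<nu>) = measure \<nu> W - (\<Sum>A\<in>P. \<integral>x. k A x * indicator W x \<partial>\<nu>)"
proof -
  interpret finite_measure \<nu> by fact
  have Wn: "W \<in> sets \<nu>" using assms by simp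
  have "(\<integral>x. (1 - (\<Sum>A\<in>P. k A x)) * indicator W x \<partial>\<nu>) = (\<integral>x. indicator W x - (\<Sum>A\<in>P. k A x * indicator W x) \<partial>\<nu>)"
    by (intro Bochner_Integration.integral_cong) (auto simp: algebra_simps sum_distrib_left)
  also have "\<dots> = (\<integral>x. indicator W x \<partial>\<nu>) - (\<integral>x. (\<Sum>A\<in>P. k A x * indicator W x) \<partial>\<nu>)"
  proof (rule Bochner_Integration.integral_diff)
    show "integrable \<nu> (indicator W :: 'a \<Rightarrow> real)" using assms(1,2,5) by (intro intg_bound[where c=1] borel_measurable_indicator) (auto split: split_indicator)
    show "integrable \<nu> (\<lambda>x. \<Sum>A\<in>P. k A x * indicator W x)"
    proof (rule Bochner_Integration.integrable_sum)
      fix A assume "A \<in> P"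
      then show "integrable \<nu> (\<lambda>x. k A x * indicator W x)"
        using assms by (intro intg_bound[where c=1]) (auto simp: indicator_def)
    qed
  qed
  also have "(\<integral>x. (\<Sum>A\<in>P. k A x * indicator W x) \<partial>\<nu>) = (\<Sum>A\<in>P. \<integral>x. k A x * indicator W x \<partial>\<nu>)"
    using assms by (intro Bochner_Integration.integral_sum intg_bound[where c=1]) (auto simp: indicator_def)
  also have "(\<integral>x. indicator W x \<partial>\<nu>) = measure \<nu> W"
    using Wn by (simp add: Int_absorb2 sets.sets_into_space)
  finally show ?thesis .
qed

lemma tv_bind_le:
  assumes s1: "subprob_space \<nu>1" and s2: "subprob_space \<nu>2"
    and e1: "sets \<nu>1 = sets M" and e2: "sets \<nu>2 = sets M"
    and K: "K \<in> measurable M (subprob_algebra N)"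
  shows "tv_norm (\<nu>1 \<bind> K) (\<nu>2 \<bind> K) \<le> tv_norm \<nu>1 \<nu>2"
proof -
  interpret S1: subprob_space \<nu>1 by fact
  interpret S2: subprob_space \<nu>2 by fact
  have sp1: "space \<nu>1 = space M" using e1 by (metis sets_eq_imp_space_eq)
  have sp2: "space \<nu>2 = space M" using e2 by (metis sets_eq_imp_space_eq)
  have K1: "K \<in> measurable \<nu>1 (subprob_algebra N)" by (subst measurable_cong_sets[OF e1 refl]) (rule K)
  have K2: "K \<in> measurable \<nu>2 (subprob_algebra N)" by (subst measurable_cong_sets[OF e2 refl]) (rule K)
  have ne: "space M \<noteq> {}" using S1.subprob_not_empty sp1 by simp
  have sb1: "sets (\<nu>1 \<bind> K) = sets N" by (rule sets_bind[OF sets_kernel[OF K1] S1.subprob_not_empty])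
  have sb2: "sets (\<nu>2 \<bind> K) = sets N" by (rule sets_bind[OF sets_kernel[OF K2] S2.subprob_not_empty])
  have fm1: "finite_measure \<nu>1" by (rule subprob_space.axioms(1)[OF s1])
  have fm2: "finite_measure \<nu>2" by (rule subprob_space.axioms(1)[OF s2])
  have e21: "sets \<nu>2 = sets \<nu>1" using e1 e2 by simp
  obtain Y where Y: "Y \<in> sets \<nu>1"
    and Yle: "\<And>X. X \<in> sets \<nu>1 \<Longrightarrow> X \<subseteq> Y \<Longrightarrow> emeasure \<nu>2 X \<le> emeasure \<nu>1 X"
    and Yge: "\<And>X. X \<in> sets \<nu>1 \<Longrightarrow> X \<inter> Y = {} \<Longrightarrow> emeasure \<nu>1 X \<le> emeasure \<nu>2 X"
    using finite_unsigned_Hahn_decomposition[OF fm1 fm2 e21] by blast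
  define Z where "Z = space M - Y"
  have YM: "Y \<in> sets M" using Y e1 by simp
  have ZM: "Z \<in> sets M" unfolding Z_def using YM by auto
  have YsubM: "Y \<subseteq> space M" using YM sets.sets_into_space by blast
  have tvYZ: "(measure \<nu>1 Y - measure \<nu>2 Y) + (measure \<nu>2 Z - measure \<nu>1 Z) \<le> tv_norm \<nu>1 \<nu>2"
  proof -
    have YZ: "Y \<noteq> Z"
    proof
      assume "Y = Z"
      then have "Y = {}" unfolding Z_def by blast
      then show False using \<open>Y = Z\<close> ne unfolding Z_def by blast
    qed
    have "(\<Sum>A\<in>{Y,Z}. \<bar>measure \<nu>1 A - measure \<nu>2 A\<bar>) \<le> tv_norm \<nu>1 \<nu>2"
      using YM ZM e1 by (intro tv_upper[OF fm1 fm2 e21]) (auto simp: disjoint_def Z_def)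
    then have "\<bar>measure \<nu>1 Y - measure \<nu>2 Y\<bar> + \<bar>measure \<nu>1 Z - measure \<nu>2 Z\<bar> \<le> tv_norm \<nu>1 \<nu>2"
      using YZ by simp
    then show ?thesis by linarith
  qed
  define k where "k A x = measure (K x) A" for A x
  have km: "k A \<in> borel_measurable M" if "A \<in> sets N" for A
    unfolding k_def using that by (intro measurable_compose[OF K measurable_measure_subprob_algebra])
  have kb: "0 \<le> k A x \<and> k A x \<le> 1" if "x \<in> space M" for A x
  proof -
    interpret subprob_space "K x" using subprob_space_kernel[OF K that] .
    show ?thesis unfolding k_def by (simp add: subprob_measure_le_1)
  qed
  have kb': "\<bar>k A x\<bar> \<le> 1" if "x \<in> space M" for A x using kb[OF that, of A] by simp
  let ?I = "\<lambda>\<nu> W g. (\<integral>x. g x * indicator W x \<partial>\<nu>)"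
  have tv_eq: "tv_norm (\<nu>1 \<bind> K) (\<nu>2 \<bind> K) = (SUP P \<in> {P. finite P \<and> P \<subseteq> sets N \<and> disjoint P}.
       \<Sum>A\<in>P. \<bar>measure (\<nu>1 \<bind> K) A - measure (\<nu>2 \<bind> K) A\<bar>)"
    unfolding tv_norm_def sb1 ..
  show ?thesis
    unfolding tv_eq
  proof (rule cSUP_least)
    show "{P. finite P \<and> P \<subseteq> sets N \<and> disjoint P} \<noteq> {}"
    proof -
      have "{} \<in> {P. finite P \<and> P \<subseteq> sets N \<and> disjoint P}" by (simp add: disjoint_def)
      then show ?thesis by blast
    qed
  next
    fix P assume "P \<in> {P. finite P \<and> P \<subseteq> sets N \<and> disjoint P}"
    then have fP: "finite P" and PN: "P \<subseteq> sets N" and dP: "disjoint P" by auto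
    have ksum: "(\<Sum>A\<in>P. k A x) \<le> 1" if x: "x \<in> space M" for x
    proof -
      interpret subprob_space "K x" using subprob_space_kernel[OF K x] .
      have "measure (K x) (\<Union>A\<in>P. id A) = (\<Sum>A\<in>P. measure (K x) (id A))"
        using fP PN sets_kernel[OF K x] dP
        by (intro finite_measure_finite_Union) (auto simp: disjoint_family_on_def disjoint_def)
      then have "(\<Sum>A\<in>P. k A x) = measure (K x) (\<Union>A\<in>P. id A)"
        unfolding k_def by simp
      also have "\<dots> \<le> 1" by (rule subprob_measure_le_1)
      finally show ?thesis .
    qed
    have k0: "0 \<le> (\<Sum>A\<in>P. k A x)" if "x \<in> space M" for x
      using kb[OF that] by (simp add: sum_nonneg)
    have mb1: "measure (\<nu>1 \<bind> K) A = (\<integral>x. k A x \<partial>\<nu>1)" if "A \<in> sets N" for A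
      unfolding k_def by (rule S1.measure_bind[OF K1 that])
    have mb2: "measure (\<nu>2 \<bind> K) A = (\<integral>x. k A x \<partial>\<nu>2)" if "A \<in> sets N" for A
      unfolding k_def by (rule S2.measure_bind[OF K2 that])
    have trm: "\<bar>measure (\<nu>1 \<bind> K) A - measure (\<nu>2 \<bind> K) A\<bar> \<le>
        (?I \<nu>1 Y (k A) - ?I \<nu>2 Y (k A)) + (?I \<nu>2 Z (k A) - ?I \<nu>1 Z (k A))" if A: "A \<in> P" for A
    proof -
      have AN: "A \<in> sets N" using A PN by auto
      have hY: "?I \<nu>2 Y (k A) \<le> ?I \<nu>1 Y (k A)"
        by (rule hahn_int[OF fm2 fm1 e2 e1 YM _ km[OF AN] kb]) (use Yle e1 in auto)
      have hZ: "?I \<nu>1 Z (k A) \<le> ?I \<nu>2 Z (k A)"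
        by (rule hahn_int[OF fm1 fm2 e1 e2 ZM _ km[OF AN] kb]) (use Yge e1 Z_def in auto)
      have "measure (\<nu>1 \<bind> K) A = ?I \<nu>1 Y (k A) + ?I \<nu>1 Z (k A)"
        unfolding mb1[OF AN] Z_def by (rule expand_split[OF fm1 e1 km[OF AN] kb' YM])
      moreover have "measure (\<nu>2 \<bind> K) A = ?I \<nu>2 Y (k A) + ?I \<nu>2 Z (k A)"
        unfolding mb2[OF AN] Z_def by (rule expand_split[OF fm2 e2 km[OF AN] kb' YM])
      ultimately show ?thesis using hY hZ by linarith
    qed
    let ?g = "\<lambda>x. 1 - (\<Sum>A\<in>P. k A x)"
    have gm: "?g \<in> borel_measurable M"
      using km PN by (intro borel_measurable_diff borel_measurable_const borel_measurable_sum) auto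
    have gb: "0 \<le> ?g x \<and> ?g x \<le> 1" if "x \<in> space M" for x using ksum[OF that] k0[OF that] by simp
    have gY: "?I \<nu>2 Y ?g \<le> ?I \<nu>1 Y ?g"
      by (rule hahn_int[OF fm2 fm1 e2 e1 YM _ gm gb]) (use Yle e1 in auto)
    have gZ: "?I \<nu>1 Z ?g \<le> ?I \<nu>2 Z ?g"
      by (rule hahn_int[OF fm1 fm2 e1 e2 ZM _ gm gb]) (use Yge e1 Z_def in auto)
    have kmP: "\<And>A. A \<in> P \<Longrightarrow> k A \<in> borel_measurable M" using km PN by auto
    have xY1: "?I \<nu>1 Y ?g = measure \<nu>1 Y - (\<Sum>A\<in>P. ?I \<nu>1 Y (k A))"
      by (rule expand_sum[OF fm1 e1 kmP kb' YM fP])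
    have xY2: "?I \<nu>2 Y ?g = measure \<nu>2 Y - (\<Sum>A\<in>P. ?I \<nu>2 Y (k A))"
      by (rule expand_sum[OF fm2 e2 kmP kb' YM fP])
    have xZ1: "?I \<nu>1 Z ?g = measure \<nu>1 Z - (\<Sum>A\<in>P. ?I \<nu>1 Z (k A))"
      by (rule expand_sum[OF fm1 e1 kmP kb' ZM fP])
    have xZ2: "?I \<nu>2 Z ?g = measure \<nu>2 Z - (\<Sum>A\<in>P. ?I \<nu>2 Z (k A))"
      by (rule expand_sum[OF fm2 e2 kmP kb' ZM fP])
    have "(\<Sum>A\<in>P. \<bar>measure (\<nu>1 \<bind> K) A - measure (\<nu>2 \<bind> K) A\<bar>) \<le>
        (\<Sum>A\<in>P. (?I \<nu>1 Y (k A) - ?I \<nu>2 Y (k A)) + (?I \<nu>2 Z (k A) - ?I \<nu>1 Z (k A)))"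
      by (rule sum_mono) (rule trm)
    also have "\<dots> = ((\<Sum>A\<in>P. ?I \<nu>1 Y (k A)) - (\<Sum>A\<in>P. ?I \<nu>2 Y (k A))) +
        ((\<Sum>A\<in>P. ?I \<nu>2 Z (k A)) - (\<Sum>A\<in>P. ?I \<nu>1 Z (k A)))"
      by (simp add: sum.distrib sum_subtractf)
    also have "\<dots> \<le> (measure \<nu>1 Y - measure \<nu>2 Y) + (measure \<nu>2 Z - measure \<nu>1 Z)"
      using gY gZ xY1 xY2 xZ1 xZ2 by linarith
    also have "\<dots> \<le> tv_norm \<nu>1 \<nu>2" by (rule tvYZ)
    finally show "(\<Sum>A\<in>P. \<bar>measure (\<nu>1 \<bind> K) A - measure (\<nu>2 \<bind> K) A\<bar>) \<le> tv_norm \<nu>1 \<nu>2" .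
  qed
qed




lemma analytic_singleton:
  assumes "analytic_space M" "x \<in> space M"
  shows "{x} \<in> sets M"
proof -
  obtain f :: "'a \<Rightarrow> real" and A where bij: "bij_betw f (space M) A"
    and fm: "f \<in> measurable M (restrict_space borel A)"
    using assms(1) unfolding analytic_space_def by blast
  have B: "A \<inter> {f x} \<in> sets (restrict_space borel A)"
    unfolding sets_restrict_space by (intro imageI) (simp add: borel_closed)
  have "f -` (A \<inter> {f x}) \<inter> space M \<in> sets M" by (rule measurable_sets[OF fm B])
  moreover have "f -` (A \<inter> {f x}) \<inter> space M = {x}"
    using bij assms(2) unfolding bij_betw_def inj_on_def by auto
  ultimately show ?thesis by simp
qed

context
  fixes G :: "'g groupoid"
  assumes bg: "borel_groupoid G"
begin

lemma gpd: "groupoid G" using bg unfolding borel_groupoid_def by simp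

lemma gax:
  shows units_sub: "units G \<subseteq> space (arrows G)"
    and unit_rng: "u \<in> units G \<Longrightarrow> rng G u = u"
    and unit_src: "u \<in> units G \<Longrightarrow> src G u = u"
    and src_unit: "a \<in> space (arrows G) \<Longrightarrow> src G a \<in> units G"
    and comp_S: "a \<in> space (arrows G) \<Longrightarrow> b \<in> space (arrows G) \<Longrightarrow> src G a = rng G b \<Longrightarrow> comp G a b \<in> space (arrows G)"
    and comp_rng: "a \<in> space (arrows G) \<Longrightarrow> b \<in> space (arrows G) \<Longrightarrow> src G a = rng G b \<Longrightarrow> rng G (comp G a b) = rng G a"
    and comp_src: "a \<in> space (arrows G) \<Longrightarrow> b \<in> space (arrows G) \<Longrightarrow> src G a = rng G b \<Longrightarrow> src G (comp G a b) = src G b"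
    and comp_assoc: "a \<in> space (arrows G) \<Longrightarrow> b \<in> space (arrows G) \<Longrightarrow> c \<in> space (arrows G) \<Longrightarrow> src G a = rng G b \<Longrightarrow> src G b = rng G c \<Longrightarrow>
        comp G (comp G a b) c = comp G a (comp G b c)"
    and comp_unit_l: "a \<in> space (arrows G) \<Longrightarrow> comp G (rng G a) a = a"
  using gpd unfolding groupoid_def Let_def by blast+

lemma rng_unit: "a \<in> space (arrows G) \<Longrightarrow> rng G a \<in> units G"
  unfolding units_def by simp

lemma space_unit_space: "space (unit_space G) = units G"
  unfolding unit_space_def using units_sub by (simp add: space_restrict_space Int_absorb2)

lemma unit_singleton: "u \<in> units G \<Longrightarrow> {u} \<in> sets (unit_space G)"
proof -
  assume u: "u \<in> units G"
  have "{u} \<in> sets (arrows G)"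
    using bg u units_sub unfolding borel_groupoid_def by (intro analytic_singleton) auto
  then have "units G \<inter> {u} \<in> sets (unit_space G)"
    unfolding unit_space_def sets_restrict_space by (rule imageI)
  then show ?thesis using u by (simp add: Int_absorb1)
qed

lemma fibre_sets:
  assumes "G_space G Z rZ act" "h \<in> space (arrows G)"
  shows "{z \<in> space Z. rZ z = src G h} \<in> sets Z"
proof -
  have rm: "rZ \<in> measurable Z (unit_space G)" using assms(1) unfolding G_space_def by simp
  have "rZ -` {src G h} \<inter> space Z \<in> sets Z"
    by (rule measurable_sets[OF rm unit_singleton[OF src_unit[OF assms(2)]]])
  moreover have "rZ -` {src G h} \<inter> space Z = {z \<in> space Z. rZ z = src G h}" by auto
  ultimately show ?thesis by simp
qed

lemma act_meas:
  assumes "G_space G Z rZ act" "h \<in> space (arrows G)"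
  shows "act h \<in> measurable (restrict_space Z {z \<in> space Z. rZ z = src G h}) Z"
proof -
  let ?S = "{(g, x). g \<in> space (arrows G) \<and> x \<in> space Z \<and> src G g = rZ x}"
  have am: "(\<lambda>(g, x). act g x) \<in> measurable (restrict_space (arrows G \<Otimes>\<^sub>M Z) ?S) Z"
    using assms(1) unfolding G_space_def by simp
  have pm: "Pair h \<in> measurable (restrict_space Z {z \<in> space Z. rZ z = src G h}) (restrict_space (arrows G \<Otimes>\<^sub>M Z) ?S)"
    by (rule measurable_restrict_space3[OF measurable_Pair1'[OF assms(2)]]) (use assms(2) in auto)
  have "(\<lambda>z. (\<lambda>(g, x). act g x) (Pair h z)) \<in> measurable (restrict_space Z {z \<in> space Z. rZ z = src G h}) Z"
    by (rule measurable_compose[OF pm am])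
  then show ?thesis by simp
qed

lemma gact_distr:
  assumes "G_space G Z rZ act" "h \<in> space (arrows G)" "sets m = sets Z"
  shows "gact_measure G Z rZ act h m = distr (restrict_space m {z \<in> space Z. rZ z = src G h}) Z (act h)"
proof -
  let ?F = "{z \<in> space Z. rZ z = src G h}"
  have sp: "space m = space Z" using assms(3) by (metis sets_eq_imp_space_eq)
  have F: "?F \<inter> space m \<in> sets m" using fibre_sets[OF assms(1,2)] assms(3) sp by (simp add: Int_absorb2)
  show ?thesis
    unfolding gact_measure_def distr_def
  proof (rule measure_of_eq[OF sets.space_closed])
    fix a
    have "act h -` a \<inter> space (restrict_space m ?F) = {x \<in> space Z. rZ x = src G h \<and> act h x \<in> a}"
      using sp by (auto simp: space_restrict_space)
    moreover have "emeasure (restrict_space m ?F) {x \<in> space Z. rZ x = src G h \<and> act h x \<in> a}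
        = emeasure m {x \<in> space Z. rZ x = src G h \<and> act h x \<in> a}"
      by (rule emeasure_restrict_space[OF F]) auto
    ultimately show "emeasure m {x \<in> space Z. rZ x = src G h \<and> act h x \<in> a} =
        emeasure (restrict_space m ?F) (act h -` a \<inter> space (restrict_space m ?F))" by simp
  qed
qed

lemma arrows_G_space: "G_space G (arrows G) (rng G) (comp G)"
  unfolding G_space_def
proof (intro conjI ballI impI)
  show "analytic_space (arrows G)" using bg unfolding borel_groupoid_def by simp
  show "rng G \<in> measurable (arrows G) (unit_space G)"
    unfolding unit_space_def using bg rng_unit unfolding borel_groupoid_def
    by (intro measurable_restrict_space2) auto
  show "comp G (rng G x) x = x" if "x \<in> space (arrows G)" for x using comp_unit_l that .
  show "comp G g x \<in> space (arrows G)" "rng G (comp G g x) = rng G g"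
    if "g \<in> space (arrows G)" "x \<in> space (arrows G)" "src G g = rng G x" for g x
    using comp_S comp_rng that by auto
  show "comp G (comp G a b) x = comp G a (comp G b x)"
    if "a \<in> space (arrows G)" "b \<in> space (arrows G)" "x \<in> space (arrows G)" "src G a = rng G b" "src G b = rng G x" for a b x
    using comp_assoc that by auto
  show "(\<lambda>(g, x). comp G g x) \<in> measurable (restrict_space (arrows G \<Otimes>\<^sub>M arrows G)
      {(g, x). g \<in> space (arrows G) \<and> x \<in> space (arrows G) \<and> src G g = rng G x}) (arrows G)"
    using bg unfolding borel_groupoid_def composable_pairs_def by simp
qed

end




context
  fixes G :: "'g groupoid" and X :: "'x measure" and rX act
    and lam :: "'x \<Rightarrow> ('x \<times> 'g) measure" and m :: "nat \<Rightarrow> 'g \<Rightarrow> 'x measure"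
  assumes bg: "borel_groupoid G"
    and XG: "G_space G X rX act"
    and YG: "G_space G (fib_prod G X rX) (\<lambda>(x, g). rX x) (\<lambda>h (x, g). (act h x, comp G h g))"
    and lpi: "pi_sys (fib_prod G X rX) X fst lam"
    and lprob0: "\<forall>x\<in>space X. prob_space (lam x)"
    and leq0: "\<forall>h\<in>space (arrows G). \<forall>x\<in>space X. src G h = rX x \<longrightarrow>
       gact_measure G (fib_prod G X rX) (\<lambda>(x, g). rX x) (\<lambda>h (x, g). (act h x, comp G h g)) h (lam x) = lam (act h x)"
    and mpi0: "\<forall>n. pi_sys X (unit_space G) rX (m n)"
    and mprob0: "\<forall>n. \<forall>u\<in>space (unit_space G). prob_space (m n u)"
begin

lemma lprob: "x \<in> space X \<Longrightarrow> prob_space (lam x)" using lprob0 by blast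
lemma leq: "h \<in> space (arrows G) \<Longrightarrow> x \<in> space X \<Longrightarrow> src G h = rX x \<Longrightarrow>
       gact_measure G (fib_prod G X rX) (\<lambda>(x, g). rX x) (\<lambda>h (x, g). (act h x, comp G h g)) h (lam x) = lam (act h x)"
  using leq0 by blast
lemma mpi: "pi_sys X (unit_space G) rX (m n)" using mpi0 by blast
lemma mprob: "u \<in> space (unit_space G) \<Longrightarrow> prob_space (m n u)" using mprob0 by blast

definition "Kd x = distr (lam x) (arrows G) snd"

lemma spY: "space (fib_prod G X rX) = {(x, g). x \<in> space X \<and> g \<in> space (arrows G) \<and> rX x = rng G g}"
  unfolding fib_prod_def by (auto simp: space_restrict_space space_pair_measure)

lemma sndm: "snd \<in> measurable (fib_prod G X rX) (arrows G)"
  unfolding fib_prod_def by (intro measurable_restrict_space1 measurable_snd)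

lemma lam_sets: "x \<in> space X \<Longrightarrow> sets (lam x) = sets (fib_prod G X rX)"
  using lpi unfolding pi_sys_def by blast

lemma lam_space: "x \<in> space X \<Longrightarrow> space (lam x) = space (fib_prod G X rX)"
  using lam_sets by (metis sets_eq_imp_space_eq)

lemma sndm_lam: "x \<in> space X \<Longrightarrow> snd \<in> measurable (lam x) (arrows G)"
  by (subst measurable_cong_sets[OF lam_sets refl]) (auto intro: sndm)

lemma K_emeas: "x \<in> space X \<Longrightarrow> A \<in> sets (arrows G) \<Longrightarrow>
    emeasure (Kd x) A = emeasure (lam x) (snd -` A \<inter> space (fib_prod G X rX))"
  unfolding Kd_def by (simp add: emeasure_distr[OF sndm_lam] lam_space)

lemma Kmeas: "Kd \<in> measurable X (subprob_algebra (arrows G))"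
proof (rule measurable_subprob_algebra)
  fix a assume a: "a \<in> space X"
  show "subprob_space (Kd a)" unfolding Kd_def
    by (rule prob_space_imp_subprob_space, rule prob_space.prob_space_distr[OF lprob[OF a] sndm_lam[OF a]])
  show "sets (Kd a) = sets (arrows G)" unfolding Kd_def by simp
next
  fix A assume A: "A \<in> sets (arrows G)"
  let ?B = "snd -` A \<inter> space (fib_prod G X rX)"
  have B: "?B \<in> sets (fib_prod G X rX)" by (rule measurable_sets[OF sndm A])
  have "(\<lambda>a. \<integral>\<^sup>+ p. indicator ?B p \<partial>lam a) \<in> borel_measurable X"
    using lpi B unfolding pi_sys_def by auto
  moreover have "\<And>a. a \<in> space X \<Longrightarrow> (\<integral>\<^sup>+ p. indicator ?B p \<partial>lam a) = emeasure (Kd a) A"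
    using B A by (simp add: K_emeas lam_sets)
  ultimately show "(\<lambda>a. emeasure (Kd a) A) \<in> borel_measurable X"
    by (rule measurable_cong[THEN iffD1, rotated]) simp
qed

lemma K_prob: "x \<in> space X \<Longrightarrow> prob_space (Kd x)"
  unfolding Kd_def by (rule prob_space.prob_space_distr[OF lprob sndm_lam])

lemma PW:
  assumes x: "x \<in> space X" and g: "g \<in> space (arrows G)" and r: "rX x = src G g" and E: "E \<in> sets (arrows G)"
  shows "emeasure (Kd (act g x)) E = emeasure (Kd x) {a \<in> space (arrows G). rng G a = src G g \<and> comp G g a \<in> E}"
proof -
  let ?Y = "fib_prod G X rX" and ?rY = "\<lambda>(x, g). rX x" and ?d = "\<lambda>h (x, g). (act h x, comp G h g)"
  let ?FY = "{z \<in> space ?Y. ?rY z = src G g}"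
  have gx: "act g x \<in> space X" using XG x g r unfolding G_space_def by auto
  have E': "{a \<in> space (arrows G). rng G a = src G g \<and> comp G g a \<in> E} \<in> sets (arrows G)"
  proof -
    let ?Fa = "{z \<in> space (arrows G). rng G z = src G g}"
    have Fa: "?Fa \<in> sets (arrows G)" by (rule fibre_sets[OF bg arrows_G_space[OF bg] g])
    have "comp G g -` E \<inter> space (restrict_space (arrows G) ?Fa) \<in> sets (restrict_space (arrows G) ?Fa)"
      by (rule measurable_sets[OF act_meas[OF bg arrows_G_space[OF bg] g] E])
    then have "comp G g -` E \<inter> space (restrict_space (arrows G) ?Fa) \<in> sets (arrows G)"
      using Fa by (subst (asm) sets_restrict_space_iff) (auto simp: Int_absorb2)
    moreover have "comp G g -` E \<inter> space (restrict_space (arrows G) ?Fa) = {a \<in> space (arrows G). rng G a = src G g \<and> comp G g a \<in> E}"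
      by (auto simp: space_restrict_space)
    ultimately show ?thesis by simp
  qed
  have lx: "lam (act g x) = distr (restrict_space (lam x) ?FY) ?Y (?d g)"
    using leq[OF g x r[symmetric]] gact_distr[OF bg YG g lam_sets[OF x]] by simp
  have FY: "?FY \<inter> space (lam x) \<in> sets (lam x)"
    using fibre_sets[OF bg YG g] lam_sets[OF x] lam_space[OF x] by (simp add: Int_absorb2)
  have dm: "?d g \<in> measurable (restrict_space (lam x) ?FY) ?Y"
  proof -
    have "sets (restrict_space (lam x) ?FY) = sets (restrict_space ?Y ?FY)"
      unfolding sets_restrict_space lam_sets[OF x] ..
    then show ?thesis by (subst measurable_cong_sets[OF _ refl]) (auto intro: act_meas[OF bg YG g])
  qed
  have sE: "snd -` E \<inter> space ?Y \<in> sets ?Y" by (rule measurable_sets[OF sndm E])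
  have "emeasure (Kd (act g x)) E = emeasure (lam (act g x)) (snd -` E \<inter> space ?Y)"
    by (rule K_emeas[OF gx E])
  also have "\<dots> = emeasure (restrict_space (lam x) ?FY) (?d g -` (snd -` E \<inter> space ?Y) \<inter> space (restrict_space (lam x) ?FY))"
    unfolding lx by (rule emeasure_distr[OF dm sE])
  also have "\<dots> = emeasure (lam x) (?d g -` (snd -` E \<inter> space ?Y) \<inter> space (restrict_space (lam x) ?FY))"
    by (rule emeasure_restrict_space[OF FY]) (auto simp: space_restrict_space)
  also have "?d g -` (snd -` E \<inter> space ?Y) \<inter> space (restrict_space (lam x) ?FY) =
      snd -` {a \<in> space (arrows G). rng G a = src G g \<and> comp G g a \<in> E} \<inter> space ?Y"
  proof -
    have "(act g x', comp G g a) \<in> space ?Y"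
      if "x' \<in> space X" "a \<in> space (arrows G)" "rX x' = rng G a" "rX x' = src G g" for x' a
      using XG that g comp_S[OF bg g that(2)] comp_rng[OF bg g that(2)] unfolding G_space_def spY by auto
    then show ?thesis
      unfolding space_restrict_space lam_space[OF x] spY by auto
  qed
  also have "emeasure (lam x) \<dots> = emeasure (Kd x) {a \<in> space (arrows G). rng G a = src G g \<and> comp G g a \<in> E}"
    by (rule K_emeas[OF x E', symmetric])
  finally show ?thesis .
qed


lemma m_sets: "u \<in> space (unit_space G) \<Longrightarrow> sets (m n u) = sets X"
  using mpi[of n] unfolding pi_sys_def by blast

lemma m_space: "u \<in> space (unit_space G) \<Longrightarrow> space (m n u) = space X"
  using m_sets by (metis sets_eq_imp_space_eq)

lemma m_conc: "u \<in> space (unit_space G) \<Longrightarrow> AE x in m n u. x \<in> space X \<and> rX x = u"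
proof -
  assume u: "u \<in> space (unit_space G)"
  obtain A where A: "A \<in> sets X" "A \<subseteq> rX -` {u}" "emeasure (m n u) (space X - A) = 0"
    using mpi[of n] u unfolding pi_sys_def by blast
  show ?thesis
  proof (rule AE_I')
    show "space X - A \<in> null_sets (m n u)" using A m_sets[OF u] by auto
    show "{x \<in> space (m n u). \<not> (x \<in> space X \<and> rX x = u)} \<subseteq> space X - A"
      using A m_space[OF u] by auto
  qed
qed

lemma Kn: "u \<in> space (unit_space G) \<Longrightarrow> Kd \<in> measurable (m n u) (subprob_algebra (arrows G))"
  by (subst measurable_cong_sets[OF m_sets refl]) (auto intro: Kmeas)

definition "mu n u = m n u \<bind> Kd"

lemma m_ne: "u \<in> space (unit_space G) \<Longrightarrow> space (m n u) \<noteq> {}"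
  using mprob prob_space.not_empty by blast

lemma mu_sets: "u \<in> space (unit_space G) \<Longrightarrow> sets (mu n u) = sets (arrows G)"
  unfolding mu_def by (rule sets_bind[OF sets_kernel[OF Kn] m_ne])

lemma mu_prob: "u \<in> space (unit_space G) \<Longrightarrow> prob_space (mu n u)"
  unfolding mu_def
  by (rule prob_space.prob_space_bind[OF mprob _ Kn]) (auto simp: m_space K_prob)

lemma mu_pi: "pi_sys (arrows G) (unit_space G) (rng G) (mu n)"
  unfolding pi_sys_def
proof (intro conjI ballI)
  fix u assume u: "u \<in> space (unit_space G)"
  show "sets (mu n u) = sets (arrows G)" by (rule mu_sets[OF u])
  let ?A = "{a \<in> space (arrows G). rng G a = u}"
  have uu: "u \<in> units G" using u space_unit_space[OF bg] by simp
  have rm: "rng G \<in> measurable (arrows G) (unit_space G)"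
    using arrows_G_space[OF bg] unfolding G_space_def by simp
  have "rng G -` {u} \<inter> space (arrows G) \<in> sets (arrows G)"
    by (rule measurable_sets[OF rm unit_singleton[OF bg uu]])
  moreover have "rng G -` {u} \<inter> space (arrows G) = ?A" by auto
  ultimately have A: "?A \<in> sets (arrows G)" by simp
  have "emeasure (mu n u) (space (arrows G) - ?A) = (\<integral>\<^sup>+x. emeasure (Kd x) (space (arrows G) - ?A) \<partial>m n u)"
    unfolding mu_def using A by (intro emeasure_bind[OF m_ne[OF u] Kn[OF u]]) auto
  also have "\<dots> = (\<integral>\<^sup>+x. 0 \<partial>m n u)"
  proof (rule nn_integral_cong_AE)
    show "AE x in m n u. emeasure (Kd x) (space (arrows G) - ?A) = 0"
      using m_conc[OF u]
    proof eventually_elim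
      case (elim x)
      then have x: "x \<in> space X" and rx: "rX x = u" by auto
      obtain B where B: "B \<in> sets (fib_prod G X rX)" "B \<subseteq> fst -` {x}" "emeasure (lam x) (space (fib_prod G X rX) - B) = 0"
        using lpi x unfolding pi_sys_def by blast
      have "emeasure (Kd x) (space (arrows G) - ?A) = emeasure (lam x) (snd -` (space (arrows G) - ?A) \<inter> space (fib_prod G X rX))"
        using A x by (intro K_emeas) auto
      also have "\<dots> \<le> emeasure (lam x) (space (fib_prod G X rX) - B)"
      proof (rule emeasure_mono)
        show "snd -` (space (arrows G) - ?A) \<inter> space (fib_prod G X rX) \<subseteq> space (fib_prod G X rX) - B"
          using B rx unfolding spY by auto
        show "space (fib_prod G X rX) - B \<in> sets (lam x)" using B lam_sets[OF x] by auto
      qed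
      finally show ?case using B by simp
    qed
  qed
  finally have "emeasure (mu n u) (space (arrows G) - ?A) = 0" by simp
  then show "\<exists>A\<in>sets (arrows G). A \<subseteq> rng G -` {u} \<and> emeasure (mu n u) (space (arrows G) - A) = 0"
    using A by (intro bexI[of _ ?A]) auto
next
  fix f :: "'g \<Rightarrow> ennreal" assume f: "f \<in> borel_measurable (arrows G)"
  let ?\<Phi> = "\<lambda>x. \<integral>\<^sup>+ p. f (snd p) \<partial>lam x"
  have "(\<lambda>p. f (snd p)) \<in> borel_measurable (fib_prod G X rX)"
    by (rule measurable_compose[OF sndm f])
  then have \<Phi>: "?\<Phi> \<in> borel_measurable X" using lpi unfolding pi_sys_def by blast
  then have "(\<lambda>u. \<integral>\<^sup>+x. ?\<Phi> x \<partial>m n u) \<in> borel_measurable (unit_space G)"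
    using mpi[of n] unfolding pi_sys_def by blast
  moreover have "(\<integral>\<^sup>+x. ?\<Phi> x \<partial>m n u) = (\<integral>\<^sup>+ a. f a \<partial>mu n u)" if u: "u \<in> space (unit_space G)" for u
  proof -
    have "(\<integral>\<^sup>+ a. f a \<partial>mu n u) = (\<integral>\<^sup>+x. \<integral>\<^sup>+a. f a \<partial>Kd x \<partial>m n u)"
      unfolding mu_def by (rule nn_integral_bind[OF f Kn[OF u]])
    also have "\<dots> = (\<integral>\<^sup>+x. ?\<Phi> x \<partial>m n u)"
    proof (rule nn_integral_cong)
      fix x assume "x \<in> space (m n u)"
      then have x: "x \<in> space X" using m_space[OF u] by simp
      show "(\<integral>\<^sup>+a. f a \<partial>Kd x) = ?\<Phi> x"
        unfolding Kd_def by (rule nn_integral_distr[OF sndm_lam[OF x]]) (simp add: f)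
    qed
    finally show ?thesis by simp
  qed
  ultimately show "(\<lambda>u. \<integral>\<^sup>+ a. f a \<partial>mu n u) \<in> borel_measurable (unit_space G)"
    by (rule measurable_cong[THEN iffD1, rotated])
qed


lemma mu_eq:
  assumes g: "g \<in> space (arrows G)" and u: "u \<in> space (unit_space G)" and gu: "src G g = u"
  shows "gact_measure G (arrows G) (rng G) (comp G) g (mu n u) = gact_measure G X rX act g (m n u) \<bind> Kd"
proof -
  let ?Fa = "{z \<in> space (arrows G). rng G z = src G g}"
  let ?F = "{z \<in> space X. rX z = src G g}"
  let ?\<nu> = "gact_measure G X rX act g (m n u)"
  have nu: "?\<nu> = distr (restrict_space (m n u) ?F) X (act g)"
    by (rule gact_distr[OF bg XG g m_sets[OF u]])
  have lhs: "gact_measure G (arrows G) (rng G) (comp G) g (mu n u) = distr (restrict_space (mu n u) ?Fa) (arrows G) (comp G g)"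
    by (rule gact_distr[OF bg arrows_G_space[OF bg] g mu_sets[OF u]])
  have nus: "sets ?\<nu> = sets X" unfolding nu by simp
  have nusp: "space ?\<nu> = space X" using nus by (metis sets_eq_imp_space_eq)
  have nune: "space ?\<nu> \<noteq> {}" using nusp m_ne[OF u] m_space[OF u] by simp
  have Knu: "Kd \<in> measurable ?\<nu> (subprob_algebra (arrows G))"
    by (subst measurable_cong_sets[OF nus refl]) (rule Kmeas)
  have musp: "space (mu n u) = space (arrows G)" using mu_sets[OF u] by (metis sets_eq_imp_space_eq)
  have Fa: "?Fa \<in> sets (arrows G)" by (rule fibre_sets[OF bg arrows_G_space[OF bg] g])
  have Fa': "?Fa \<inter> space (mu n u) \<in> sets (mu n u)" using Fa mu_sets[OF u] musp by (simp add: Int_absorb2)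
  have F: "?F \<in> sets X" by (rule fibre_sets[OF bg XG g])
  have F': "?F \<inter> space (m n u) \<in> sets (m n u)" using F m_sets[OF u] m_space[OF u] by (simp add: Int_absorb2)
  have cm: "comp G g \<in> measurable (restrict_space (mu n u) ?Fa) (arrows G)"
  proof -
    have "sets (restrict_space (mu n u) ?Fa) = sets (restrict_space (arrows G) ?Fa)"
      unfolding sets_restrict_space mu_sets[OF u] ..
    then show ?thesis by (subst measurable_cong_sets[OF _ refl]) (auto intro: act_meas[OF bg arrows_G_space[OF bg] g])
  qed
  have am: "act g \<in> measurable (restrict_space (m n u) ?F) X"
  proof -
    have "sets (restrict_space (m n u) ?F) = sets (restrict_space X ?F)"
      unfolding sets_restrict_space m_sets[OF u] ..
    then show ?thesis by (subst measurable_cong_sets[OF _ refl]) (auto intro: act_meas[OF bg XG g])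
  qed
  show ?thesis
  proof (rule measure_eqI)
    show "sets (gact_measure G (arrows G) (rng G) (comp G) g (mu n u)) = sets (?\<nu> \<bind> Kd)"
      unfolding lhs by (simp add: sets_bind[OF sets_kernel[OF Knu] nune])
  next
    fix E assume "E \<in> sets (gact_measure G (arrows G) (rng G) (comp G) g (mu n u))"
    then have E: "E \<in> sets (arrows G)" unfolding lhs by simp
    let ?E' = "{a \<in> space (arrows G). rng G a = src G g \<and> comp G g a \<in> E}"
    have setE: "comp G g -` E \<inter> space (restrict_space (mu n u) ?Fa) = ?E'"
      using musp by (auto simp: space_restrict_space)
    have E': "?E' \<in> sets (arrows G)"
    proof -
      have "comp G g -` E \<inter> space (restrict_space (mu n u) ?Fa) \<in> sets (restrict_space (mu n u) ?Fa)"
        by (rule measurable_sets[OF cm E])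
      then have "comp G g -` E \<inter> space (restrict_space (mu n u) ?Fa) \<in> sets (mu n u)"
        using Fa' by (subst (asm) sets_restrict_space_iff) auto
      then show ?thesis using setE mu_sets[OF u] by simp
    qed
    have "emeasure (gact_measure G (arrows G) (rng G) (comp G) g (mu n u)) E
        = emeasure (restrict_space (mu n u) ?Fa) (comp G g -` E \<inter> space (restrict_space (mu n u) ?Fa))"
      unfolding lhs by (rule emeasure_distr[OF cm E])
    also have "\<dots> = emeasure (mu n u) ?E'"
      unfolding setE by (rule emeasure_restrict_space[OF Fa']) auto
    also have "\<dots> = (\<integral>\<^sup>+x. emeasure (Kd x) ?E' \<partial>m n u)"
      unfolding mu_def by (rule emeasure_bind[OF m_ne[OF u] Kn[OF u] E'])
    also have "\<dots> = (\<integral>\<^sup>+x. emeasure (Kd (act g x)) E * indicator ?F x \<partial>m n u)"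
    proof (rule nn_integral_cong_AE)
      show "AE x in m n u. emeasure (Kd x) ?E' = emeasure (Kd (act g x)) E * indicator ?F x"
        using m_conc[OF u]
      proof eventually_elim
        case (elim x)
        then have x: "x \<in> space X" and rx: "rX x = src G g" using gu by auto
        show ?case using PW[OF x g rx E] x rx by simp
      qed
    qed
    also have "\<dots> = (\<integral>\<^sup>+x. emeasure (Kd (act g x)) E \<partial>restrict_space (m n u) ?F)"
      by (rule nn_integral_restrict_space[OF F', symmetric])
    also have "\<dots> = (\<integral>\<^sup>+y. emeasure (Kd y) E \<partial>?\<nu>)"
      unfolding nu
      by (rule nn_integral_distr[OF am, symmetric]) (simp add: measurable_emeasure_kernel[OF Kmeas E])
    also have "\<dots> = emeasure (?\<nu> \<bind> Kd) E"
      by (rule emeasure_bind[OF nune Knu E, symmetric])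
    finally show "emeasure (gact_measure G (arrows G) (rng G) (comp G) g (mu n u)) E = emeasure (?\<nu> \<bind> Kd) E" .
  qed
qed

lemma nu_sub:
  assumes g: "g \<in> space (arrows G)" and u: "u \<in> space (unit_space G)" and gu: "src G g = u"
  shows "subprob_space (gact_measure G X rX act g (m n u))"
proof -
  let ?F = "{z \<in> space X. rX z = src G g}"
  let ?\<nu> = "gact_measure G X rX act g (m n u)"
  have ru: "rng G g \<in> space (unit_space G)" using rng_unit[OF bg g] space_unit_space[OF bg] by simp
  have nu: "?\<nu> = distr (restrict_space (m n u) ?F) X (act g)"
    by (rule gact_distr[OF bg XG g m_sets[OF u]])
  have nus: "sets ?\<nu> = sets X" unfolding nu by simp
  have nusp: "space ?\<nu> = space X" using nus by (metis sets_eq_imp_space_eq)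
  have F: "?F \<in> sets X" by (rule fibre_sets[OF bg XG g])
  have F': "?F \<inter> space (m n u) \<in> sets (m n u)" using F m_sets[OF u] m_space[OF u] by (simp add: Int_absorb2)
  have am: "act g \<in> measurable (restrict_space (m n u) ?F) X"
  proof -
    have "sets (restrict_space (m n u) ?F) = sets (restrict_space X ?F)"
      unfolding sets_restrict_space m_sets[OF u] ..
    then show ?thesis by (subst measurable_cong_sets[OF _ refl]) (auto intro: act_meas[OF bg XG g])
  qed
  show "subprob_space ?\<nu>"
  proof (rule subprob_spaceI)
    show "space ?\<nu> \<noteq> {}" using nusp m_ne[OF u] m_space[OF u] by simp
    have "emeasure ?\<nu> (space ?\<nu>) = emeasure (restrict_space (m n u) ?F) (act g -` space X \<inter> space (restrict_space (m n u) ?F))"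
      unfolding nusp unfolding nu by (rule emeasure_distr[OF am]) simp
    also have "\<dots> = emeasure (m n u) (act g -` space X \<inter> space (restrict_space (m n u) ?F))"
      by (rule emeasure_restrict_space[OF F']) (auto simp: space_restrict_space)
    also have "\<dots> \<le> 1" by (rule prob_space.emeasure_le_1[OF mprob[OF u]])
    finally show "emeasure ?\<nu> (space ?\<nu>) \<le> 1" .
  qed
qed

lemma mu_tv:
  assumes g: "g \<in> space (arrows G)" and u: "u \<in> space (unit_space G)" and gu: "src G g = u"
  shows "tv_norm (gact_measure G (arrows G) (rng G) (comp G) g (mu n u)) (mu n (rng G g))
    \<le> tv_norm (gact_measure G X rX act g (m n u)) (m n (rng G g))"
    and "0 \<le> tv_norm (gact_measure G (arrows G) (rng G) (comp G) g (mu n u)) (mu n (rng G g))"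
proof -
  let ?\<nu> = "gact_measure G X rX act g (m n u)"
  have ru: "rng G g \<in> space (unit_space G)" using rng_unit[OF bg g] space_unit_space[OF bg] by simp
  have nus: "sets ?\<nu> = sets X" using gact_distr[OF bg XG g m_sets[OF u]] by simp
  have s1: "subprob_space ?\<nu>" by (rule nu_sub[OF g u gu])
  have s2: "subprob_space (m n (rng G g))" by (rule prob_space_imp_subprob_space[OF mprob[OF ru]])
  show "tv_norm (gact_measure G (arrows G) (rng G) (comp G) g (mu n u)) (mu n (rng G g))
    \<le> tv_norm (gact_measure G X rX act g (m n u)) (m n (rng G g))"
    unfolding mu_eq[OF g u gu] mu_def[of n "rng G g"]
    by (rule tv_bind_le[OF s1 s2 nus m_sets[OF ru] Kmeas])
  have Knu: "Kd \<in> measurable ?\<nu> (subprob_algebra (arrows G))"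
    by (subst measurable_cong_sets[OF nus refl]) (rule Kmeas)
  have nune: "space ?\<nu> \<noteq> {}" using subprob_space.subprob_not_empty[OF s1] .
  have f1: "finite_measure (?\<nu> \<bind> Kd)"
    by (rule subprob_space.axioms(1)[OF subprob_space_bind[OF s1 Knu]])
  have f2: "finite_measure (mu n (rng G g))"
    by (rule subprob_space.axioms(1)[OF prob_space_imp_subprob_space[OF mu_prob[OF ru]]])
  have "sets (mu n (rng G g)) = sets (?\<nu> \<bind> Kd)"
    using mu_sets[OF ru] sets_bind[OF sets_kernel[OF Knu] nune] by simp
  from tv_nonneg[OF f1 f2 this]
  show "0 \<le> tv_norm (gact_measure G (arrows G) (rng G) (comp G) g (mu n u)) (mu n (rng G g))"
    unfolding mu_eq[OF g u gu] .
qed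

end




theorem lemma2p7:
  fixes G :: "'g groupoid" and X :: "'x measure" and rX :: "'x \<Rightarrow> 'g"
    and act :: "'g \<Rightarrow> 'x \<Rightarrow> 'x"
  assumes "borel_groupoid G"
    and "proper_G_space G X rX act"
    and "G_amenable G X rX act (unit_space G) (\<lambda>u. u) (unit_action G) rX"
  shows "borel_amenable G"
proof -
  note bg = assms(1)
  have XG: "G_space G X rX act" using assms(2) unfolding proper_G_space_def by simp
  have PA: "properly_amenable G (fib_prod G X rX) (\<lambda>(x, g). rX x)
       (\<lambda>h (x, g). (act h x, comp G h g)) X rX act fst" using assms(2) unfolding proper_G_space_def by simp
  have YG: "G_space G (fib_prod G X rX) (\<lambda>(x, g). rX x) (\<lambda>h (x, g). (act h x, comp G h g))"
    using PA unfolding properly_amenable_def G_map_def by simp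
  obtain lam where lpi: "pi_sys (fib_prod G X rX) X fst lam"
    and lprob: "\<And>x. x \<in> space X \<Longrightarrow> prob_space (lam x)"
    and leq: "\<And>h x. h \<in> space (arrows G) \<Longrightarrow> x \<in> space X \<Longrightarrow> src G h = rX x \<Longrightarrow>
       gact_measure G (fib_prod G X rX) (\<lambda>(x, g). rX x) (\<lambda>h (x, g). (act h x, comp G h g)) h (lam x) = lam (act h x)"
    using PA unfolding properly_amenable_def by blast
  have UG: "G_space G (unit_space G) (\<lambda>u. u) (unit_action G)"
    using assms(3) unfolding G_amenable_def G_map_def by simp
  obtain m :: "nat \<Rightarrow> 'g \<Rightarrow> 'x measure" where mpi: "\<And>n. pi_sys X (unit_space G) rX (m n)"
    and mprob: "\<And>n u. u \<in> space (unit_space G) \<Longrightarrow> prob_space (m n u)"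
    and conv: "\<And>g y. g \<in> space (arrows G) \<Longrightarrow> y \<in> space (unit_space G) \<Longrightarrow> src G g = y \<Longrightarrow>
       (\<lambda>n. tv_norm (gact_measure G X rX act g (m n y)) (m n (unit_action G g y))) \<longlonglongrightarrow> 0"
    using assms(3) unfolding G_amenable_def by blast
  have lprob0: "\<forall>x\<in>space X. prob_space (lam x)" using lprob by blast
  have leq0: "\<forall>h\<in>space (arrows G). \<forall>x\<in>space X. src G h = rX x \<longrightarrow>
       gact_measure G (fib_prod G X rX) (\<lambda>(x, g). rX x) (\<lambda>h (x, g). (act h x, comp G h g)) h (lam x) = lam (act h x)"
    using leq by blast
  have mpi0: "\<forall>n. pi_sys X (unit_space G) rX (m n)" using mpi by blast
  have mprob0: "\<forall>n. \<forall>u\<in>space (unit_space G). prob_space (m n u)" using mprob by blast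
  note H = bg XG YG lpi lprob0 leq0 mpi0 mprob0
  have rm: "rng G \<in> measurable (arrows G) (unit_space G)"
    using arrows_G_space[OF bg] unfolding G_space_def by simp
  show ?thesis
    unfolding borel_amenable_def G_amenable_def
  proof (intro conjI)
    show "G_map G (arrows G) (rng G) (comp G) (unit_space G) (\<lambda>u. u) (unit_action G) (rng G)"
      unfolding G_map_def
      using arrows_G_space[OF bg] UG rm comp_rng[OF bg] by (auto simp: unit_action_def)
    show "rng G ` space (arrows G) = space (unit_space G)"
      unfolding space_unit_space[OF bg] units_def ..
    show "\<exists>m. (\<forall>n. pi_sys (arrows G) (unit_space G) (rng G) (m n) \<and> (\<forall>y\<in>space (unit_space G). prob_space (m n y))) \<and>
        (\<forall>g\<in>space (arrows G). \<forall>y\<in>space (unit_space G). src G g = y \<longrightarrow>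
           (\<lambda>n. tv_norm (gact_measure G (arrows G) (rng G) (comp G) g (m n y)) (m n (unit_action G g y))) \<longlonglongrightarrow> 0)"
    proof (intro exI conjI allI ballI impI)
      fix n
      show "pi_sys (arrows G) (unit_space G) (rng G) (mu G lam m n)" by (rule mu_pi[OF H])
      fix y assume "y \<in> space (unit_space G)"
      then show "prob_space (mu G lam m n y)" by (rule mu_prob[OF H])
    next
      fix g y assume g: "g \<in> space (arrows G)" and y: "y \<in> space (unit_space G)" and gy: "src G g = y"
      show "(\<lambda>n. tv_norm (gact_measure G (arrows G) (rng G) (comp G) g (mu G lam m n y)) (mu G lam m n (unit_action G g y))) \<longlonglongrightarrow> 0"
      proof (rule tendsto_sandwich[where f="\<lambda>n. 0" and h="\<lambda>n. tv_norm (gact_measure G X rX act g (m n y)) (m n (unit_action G g y))"])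
        show "\<forall>\<^sub>F n in sequentially. 0 \<le> tv_norm (gact_measure G (arrows G) (rng G) (comp G) g (mu G lam m n y)) (mu G lam m n (unit_action G g y))"
          using mu_tv(2)[OF H g y gy] by (simp add: unit_action_def)
        show "\<forall>\<^sub>F n in sequentially. tv_norm (gact_measure G (arrows G) (rng G) (comp G) g (mu G lam m n y)) (mu G lam m n (unit_action G g y))
            \<le> tv_norm (gact_measure G X rX act g (m n y)) (m n (unit_action G g y))"
          using mu_tv(1)[OF H g y gy] by (simp add: unit_action_def)
        show "(\<lambda>n. 0::real) \<longlonglongrightarrow> 0" by simp
        show "(\<lambda>n. tv_norm (gact_measure G X rX act g (m n y)) (m n (unit_action G g y))) \<longlonglongrightarrow> 0"
          by (rule conv[OF g y gy])
      qed
    qed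
  qed
qed


end
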